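(* Let $d,g\ge 1$ be integers and $n=dg$. In the network $\mathrm{POPS}(d,g)$, any permutation $\pi$ of $\{0,\dots,n-1\}$ can be routed using one slot when $d=1$ and $2\lceil d/g\rceil$ slots when $d>1$.
   Context: The network $\mathrm{POPS}(d,g)$ (Partitioned Optical Passive Stars network) has $n=dg$ processors indexed $0,\dots,n-1$; processor $i$ belongs to group $\mathrm{group}(i):=\lfloor i/d\rfloor\in\{0,\dots,g-1\}$, so each group has $d$ processors. For each pair of groups $a,b\in\{0,\dots,g-1\}$ there is a coupler $c(b,a)$ whose sources are the processors of group $a$ and whose destinations are the processors of group $b$ ($g^2$ couplers in total). Processor $i$ can transmit to the couplers $c(a,\mathrm{group}(i))$, $a=0,\dots,g-1$, and can receive from the couplers $c(\mathrm{group}(i),b)$, $b=0,\dots,g-1$. Computation proceeds in synchronous steps called slots: in one slot each processor, in parallel, performs local computation, sends one packet to any subset of its transmitters (couplers), and receives a packet from one of its receivers (obtaining the packet sent on that coupler in that slot); it is required that no two processors send a packet to the same coupler in the same slot. Processors may store packets in local memory between slots. Routing a permutation $\pi$ of $\{0,\dots,n-1\}$ means: initially processor $i$ holds a packet $p_i$ with destination $\pi(i)$, for each $i$, and at the end each packet $p_i$ must be at processor $\pi(i)$. *)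

theory Defs
  imports Complex_Main
begin

text \<open>Processors are 0..n-1 with n = d*g; packet p_i is
identified with the natural number i. A slot is a triple (pk, S, r):
processor i sends packet pk i to the couplers c(a, group i) for a in S i
(S i = {} means no transmission), and receives from coupler c(group i, r i).\<close>

type_synonym slot = "(nat \<Rightarrow> nat) \<times> (nat \<Rightarrow> nat set) \<times> (nat \<Rightarrow> nat)"

definition grp :: "nat \<Rightarrow> nat \<Rightarrow> nat" where
  "grp d i = i div d"

text \<open>Validity of a slot given current memories M (M i = set of packets stored at i).
The coupler c(a, grp i) is used by i iff a \<in> S i; two distinct processors use the same
coupler iff they are in the same group and share a target group.\<close>
definition valid_slot :: "nat \<Rightarrow> nat \<Rightarrow> (nat \<Rightarrow> nat set) \<Rightarrow> slot \<Rightarrow> bool" where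
  "valid_slot d g M s = (case s of (pk, S, r) \<Rightarrow>
     (\<forall>i < d*g. S i \<subseteq> {..<g} \<and> (S i \<noteq> {} \<longrightarrow> pk i \<in> M i) \<and> r i < g) \<and>
     (\<forall>i < d*g. \<forall>j < d*g. i \<noteq> j \<and> grp d i = grp d j \<longrightarrow> S i \<inter> S j = {}))"

definition step :: "nat \<Rightarrow> nat \<Rightarrow> (nat \<Rightarrow> nat set) \<Rightarrow> slot \<Rightarrow> (nat \<Rightarrow> nat set)" where
  "step d g M s = (case s of (pk, S, r) \<Rightarrow>
     (\<lambda>i. M i \<union> {pk j | j. j < d*g \<and> grp d j = r i \<and> grp d i \<in> S j}))"

fun valid_sched :: "nat \<Rightarrow> nat \<Rightarrow> (nat \<Rightarrow> nat set) \<Rightarrow> slot list \<Rightarrow> bool" where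
  "valid_sched d g M [] = True"
| "valid_sched d g M (s # ss) = (valid_slot d g M s \<and> valid_sched d g (step d g M s) ss)"

fun run :: "nat \<Rightarrow> nat \<Rightarrow> (nat \<Rightarrow> nat set) \<Rightarrow> slot list \<Rightarrow> (nat \<Rightarrow> nat set)" where
  "run d g M [] = M"
| "run d g M (s # ss) = run d g (step d g M s) ss"

definition routable_in :: "nat \<Rightarrow> nat \<Rightarrow> (nat \<Rightarrow> nat) \<Rightarrow> nat \<Rightarrow> bool" where
  "routable_in d g \<pi> t = (\<exists>ss. length ss = t \<and> valid_sched d g (\<lambda>i. {i}) ss \<and>
      (\<forall>i < d*g. i \<in> run d g (\<lambda>i. {i}) ss (\<pi> i)))"

end

theory Submission
  imports Defs
begin


lemma hall_sdr:
  fixes A :: "'i \<Rightarrow> 'a set"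
  assumes "finite I" "\<forall>i\<in>I. finite (A i)" "\<forall>J\<subseteq>I. card J \<le> card (\<Union>(A ` J))"
  shows "\<exists>f. inj_on f I \<and> (\<forall>i\<in>I. f i \<in> A i)"
  using assms(2,3)
proof (induction "\<Sum>i\<in>I. card (A i)" arbitrary: A rule: less_induct)
  case less
  note fin = less.prems(1) and hall = less.prems(2)
  show ?case
  proof (cases "\<forall>i\<in>I. card (A i) \<le> 1")
    case True
    have one: "card (A i) = 1" if "i \<in> I" for i
    proof -
      have "card {i} \<le> card (\<Union>(A ` {i}))" using hall that by blast
      then show ?thesis using True that by (simp add: le_antisym)
    qed
    define f where "f i = the_elem (A i)" for i
    have Af: "A i = {f i}" if "i \<in> I" for i
      using one[OF that] unfolding f_def by (metis card_1_singletonE the_elem_eq)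
    have "inj_on f I"
    proof (rule inj_onI)
      fix i j assume ij: "i \<in> I" "j \<in> I" "f i = f j"
      show "i = j"
      proof (rule ccontr)
        assume "i \<noteq> j"
        have "card {i, j} \<le> card (\<Union>(A ` {i, j}))" using hall ij by (meson empty_subsetI insert_subset)
        then show False using Af ij \<open>i \<noteq> j\<close> by simp
      qed
    qed
    then show ?thesis using Af by auto
  next
    case False
    then obtain i0 where i0: "i0 \<in> I" "2 \<le> card (A i0)" by force
    then obtain x1 x2 where x12: "x1 \<in> A i0" "x2 \<in> A i0" "x1 \<noteq> x2"
      by (metis One_nat_def card.infinite card_le_Suc0_iff_eq not_less_eq_eq numerals(2) zero_le_one zero_order(3))
    define B where "B x = A(i0 := A i0 - {x})" for x
    have Bsub: "B x i \<subseteq> A i" for x i unfolding B_def by auto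
    have Bfin: "\<forall>i\<in>I. finite (B x i)" for x using fin Bsub finite_subset by metis
    have "\<exists>x\<in>{x1,x2}. \<forall>J\<subseteq>I. card J \<le> card (\<Union>(B x ` J))"
    proof (rule ccontr)
      assume "\<not> ?thesis"
      then obtain J1 J2 where J1: "J1 \<subseteq> I" "card (\<Union>(B x1 ` J1)) < card J1"
        and J2: "J2 \<subseteq> I" "card (\<Union>(B x2 ` J2)) < card J2"
        by (meson not_le insertI1 insertI2 singletonI)
      have gen: "\<exists>K. K \<subseteq> I - {i0} \<and> card (\<Union>(A ` K) \<union> (A i0 - {x})) \<le> card K \<and> J = insert i0 K"
        if J: "J \<subseteq> I" "card (\<Union>(B x ` J)) < card J" for J x
      proof -
        have "i0 \<in> J"
        proof (rule ccontr)
          assume "i0 \<notin> J"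
          then have "B x ` J = A ` J" unfolding B_def by auto
          then show False using J hall by (metis not_le)
        qed
        define K where "K = J - {i0}"
        have JK: "J = insert i0 K" "i0 \<notin> K" using \<open>i0 \<in> J\<close> K_def by auto
        have "finite K" using J(1) \<open>finite I\<close> K_def finite_subset by blast
        have "\<Union>(B x ` J) = \<Union>(A ` K) \<union> (A i0 - {x})" unfolding JK B_def using JK(2) by auto
        moreover have "card J = Suc (card K)" using JK \<open>finite K\<close> by simp
        moreover have "K \<subseteq> I - {i0}" using J(1) K_def by blast
        ultimately show ?thesis using J(2) JK(1) by (intro exI[of _ K]) simp
      qed
      obtain K1 where K1: "K1 \<subseteq> I - {i0}" "card (\<Union>(A ` K1) \<union> (A i0 - {x1})) \<le> card K1"
        using gen[OF J1] by blast
      obtain K2 where K2: "K2 \<subseteq> I - {i0}" "card (\<Union>(A ` K2) \<union> (A i0 - {x2})) \<le> card K2"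
        using gen[OF J2] by blast
      define U1 where "U1 = \<Union>(A ` K1) \<union> (A i0 - {x1})"
      define U2 where "U2 = \<Union>(A ` K2) \<union> (A i0 - {x2})"
      have fK1: "finite K1" and fK2: "finite K2" using K1 K2 \<open>finite I\<close> finite_subset by blast+
      have fU1: "finite U1" unfolding U1_def using fK1 K1 fin i0 by auto
      have fU2: "finite U2" unfolding U2_def using fK2 K2 fin i0 by auto
      have "card (insert i0 (K1 \<union> K2)) \<le> card (\<Union>(A ` insert i0 (K1 \<union> K2)))"
        using hall K1 K2 i0 by (meson Diff_subset Un_least insert_subset order_trans)
      also have "\<dots> \<le> card (U1 \<union> U2)"
        apply (rule card_mono) using fU1 fU2 apply simp
        unfolding U1_def U2_def using x12 by auto
      finally have c0: "card (insert i0 (K1 \<union> K2)) \<le> card (U1 \<union> U2)" .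
      have "i0 \<notin> K1 \<union> K2" using K1 K2 by blast
      then have c1: "Suc (card (K1 \<union> K2)) \<le> card (U1 \<union> U2)"
        using c0 fK1 fK2 by simp
      have "card (K1 \<inter> K2) \<le> card (\<Union>(A ` (K1 \<inter> K2)))"
        using hall K1 K2 by (meson Diff_subset inf.coboundedI1 order_trans)
      also have "\<dots> \<le> card (U1 \<inter> U2)"
        apply (rule card_mono) using fU1 fU2 apply simp
        unfolding U1_def U2_def by auto
      finally have c2: "card (K1 \<inter> K2) \<le> card (U1 \<inter> U2)" .
      have "card U1 + card U2 = card (U1 \<union> U2) + card (U1 \<inter> U2)"
        using card_Un_Int fU1 fU2 by blast
      moreover have "card K1 + card K2 = card (K1 \<union> K2) + card (K1 \<inter> K2)"
        using card_Un_Int fK1 fK2 by blast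
      ultimately show False using c1 c2 K1(2) K2(2) unfolding U1_def U2_def by linarith
    qed
    then obtain x where x: "x \<in> {x1, x2}" "\<forall>J\<subseteq>I. card J \<le> card (\<Union>(B x ` J))" by blast
    have "(\<Sum>i\<in>I. card (B x i)) < (\<Sum>i\<in>I. card (A i))"
    proof (rule sum_strict_mono_ex1[OF \<open>finite I\<close>])
      show "\<forall>i\<in>I. card (B x i) \<le> card (A i)" using Bsub fin card_mono by metis
      have "card (B x i0) < card (A i0)" unfolding B_def using x x12 fin i0
        by (auto intro!: psubset_card_mono)
      then show "\<exists>i\<in>I. card (B x i) < card (A i)" using i0 by blast
    qed
    from less.hyps[OF this Bfin x(2)] obtain f where "inj_on f I" "\<forall>i\<in>I. f i \<in> B x i" by blast
    then show ?thesis using Bsub by blast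
  qed
qed



definition regb :: "'e set \<Rightarrow> ('e \<Rightarrow> 'a) \<Rightarrow> ('e \<Rightarrow> 'b) \<Rightarrow> 'a set \<Rightarrow> 'b set \<Rightarrow> nat \<Rightarrow> bool" where
  "regb E u v L R k \<longleftrightarrow> finite E \<and> finite L \<and> finite R \<and> (\<forall>e\<in>E. u e \<in> L \<and> v e \<in> R)
     \<and> (\<forall>x\<in>L. card {e\<in>E. u e = x} = k) \<and> (\<forall>y\<in>R. card {e\<in>E. v e = y} = k)"

lemma card_fib_sum:
  assumes "finite E" "finite J" "\<forall>x\<in>J. card {e\<in>E. u e = x} = k"
  shows "card {e\<in>E. u e \<in> J} = k * card J"
proof -
  have "{e\<in>E. u e \<in> J} = (\<Union>x\<in>J. {e\<in>E. u e = x})" by auto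
  moreover have "card (\<Union>x\<in>J. {e\<in>E. u e = x}) = (\<Sum>x\<in>J. card {e\<in>E. u e = x})"
    by (rule card_UN_disjoint) (use assms in auto)
  ultimately show ?thesis using assms(3) by simp
qed

lemma regb_pm:
  assumes "regb E u v L R k" "k > 0"
  shows "\<exists>M\<subseteq>E. (\<forall>x\<in>L. \<exists>e\<in>M. u e = x) \<and> (\<forall>y\<in>R. \<exists>e\<in>M. v e = y) \<and> inj_on u M \<and> inj_on v M"
proof -
  note r = assms(1)[unfolded regb_def]
  have fE: "finite E" and fL: "finite L" and fR0: "finite R" using r by auto
  have uv: "\<forall>e\<in>E. u e \<in> L \<and> v e \<in> R" using r by blast
  have ku: "\<forall>x\<in>L. card {e\<in>E. u e = x} = k" and kv: "\<forall>y\<in>R. card {e\<in>E. v e = y} = k"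
    using r by blast+
  define A where "A x = v ` {e\<in>E. u e = x}" for x
  have hall: "\<forall>J\<subseteq>L. card J \<le> card (\<Union>(A ` J))"
  proof (intro allI impI)
    fix J assume J: "J \<subseteq> L"
    have fJ: "finite J" using J fL finite_subset by blast
    have NR: "\<Union>(A ` J) \<subseteq> R" unfolding A_def using uv by blast
    have fN: "finite (\<Union>(A ` J))" using NR fR0 finite_subset by blast
    have kN: "\<forall>y\<in>\<Union>(A ` J). card {e\<in>E. v e = y} = k" using kv NR by blast
    have kJ: "\<forall>x\<in>J. card {e\<in>E. u e = x} = k" using ku J by blast
    have sub: "{e\<in>E. u e \<in> J} \<subseteq> {e\<in>E. v e \<in> \<Union>(A ` J)}" unfolding A_def by blast
    have fin2: "finite {e\<in>E. v e \<in> \<Union>(A ` J)}" using fE by simp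
    have "k * card J = card {e\<in>E. u e \<in> J}"
      using card_fib_sum[OF fE fJ kJ] by simp
    also have "\<dots> \<le> card {e\<in>E. v e \<in> \<Union>(A ` J)}"
      using card_mono[OF fin2 sub] .
    also have "\<dots> = k * card (\<Union>(A ` J))"
      using card_fib_sum[OF fE fN kN] .
    finally have "k * card J \<le> k * card (\<Union>(A ` J))" .
    then show "card J \<le> card (\<Union>(A ` J))" using assms(2) by simp
  qed
  have finA: "\<forall>x\<in>L. finite (A x)" unfolding A_def using fE by simp
  obtain f where f: "inj_on f L" "\<forall>x\<in>L. f x \<in> A x" using hall_sdr[OF fL finA hall] by blast
  have e1: "{e\<in>E. u e \<in> L} = E" using uv by blast
  have e2: "{e\<in>E. v e \<in> R} = E" using uv by blast
  have "k * card L = card E" using card_fib_sum[OF fE fL ku] e1 by simp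
  moreover have "k * card R = card E" using card_fib_sum[OF fE fR0 kv] e2 by simp
  ultimately have cLR: "card L = card R" using assms(2) by (metis mult_left_cancel not_gr0)
  have fLR: "f ` L \<subseteq> R"
  proof
    fix y assume "y \<in> f ` L"
    then obtain x where x: "x \<in> L" "y = f x" by blast
    then have "f x \<in> v ` {e\<in>E. u e = x}" using f A_def by simp
    then obtain e where "e \<in> E" "f x = v e" by blast
    then show "y \<in> R" using uv x by metis
  qed
  have "card (f ` L) = card R" using card_image[OF f(1)] cLR by simp
  then have fR: "f ` L = R" using card_subset_eq[OF fR0 fLR] by blast
  have "\<forall>x\<in>L. \<exists>e. e \<in> E \<and> u e = x \<and> v e = f x"
  proof
    fix x assume x: "x \<in> L"
    then have "f x \<in> v ` {e\<in>E. u e = x}" using f A_def by simp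
    then obtain e where "e \<in> E" "u e = x" "f x = v e" by blast
    then show "\<exists>e. e \<in> E \<and> u e = x \<and> v e = f x" by auto
  qed
  then have "\<exists>ee. \<forall>x\<in>L. ee x \<in> E \<and> u (ee x) = x \<and> v (ee x) = f x" by (rule bchoice)
  then obtain ee where ee: "\<forall>x\<in>L. ee x \<in> E \<and> u (ee x) = x \<and> v (ee x) = f x" by blast
  define M where "M = ee ` L"
  have "M \<subseteq> E" using ee M_def by blast
  moreover have "\<forall>x\<in>L. \<exists>e\<in>M. u e = x"
  proof
    fix x assume x: "x \<in> L"
    have "ee x \<in> M" using x M_def by blast
    moreover have "u (ee x) = x" using x ee by blast
    ultimately show "\<exists>e\<in>M. u e = x" by blast
  qed
  moreover have "\<forall>y\<in>R. \<exists>e\<in>M. v e = y"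
  proof
    fix y assume "y \<in> R"
    then obtain x where x: "x \<in> L" "y = f x" using fR by blast
    have "ee x \<in> M" using x M_def by blast
    moreover have "v (ee x) = y" using x ee by simp
    ultimately show "\<exists>e\<in>M. v e = y" by blast
  qed
  moreover have "inj_on u M"
  proof (rule inj_onI)
    fix e e' assume "e \<in> M" "e' \<in> M" and eq: "u e = u e'"
    then obtain x x' where x: "x \<in> L" "e = ee x" "x' \<in> L" "e' = ee x'" using M_def by blast
    then have "x = x'" using eq ee by metis
    then show "e = e'" using x by simp
  qed
  moreover have "inj_on v M"
  proof (rule inj_onI)
    fix e e' assume "e \<in> M" "e' \<in> M" and eq: "v e = v e'"
    then obtain x x' where x: "x \<in> L" "e = ee x" "x' \<in> L" "e' = ee x'" using M_def by blast
    then have "f x = f x'" using eq ee by metis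
    then have "x = x'" using f(1) x inj_on_eq_iff by metis
    then show "e = e'" using x by simp
  qed
  ultimately show ?thesis by blast
qed

lemma regb_col:
  assumes "regb E u v L R k"
  shows "\<exists>col. (\<forall>e\<in>E. col e < k) \<and>
     (\<forall>e\<in>E. \<forall>e'\<in>E. e \<noteq> e' \<and> (u e = u e' \<or> v e = v e') \<longrightarrow> col e \<noteq> col e') \<and>
     (\<forall>c<k. \<forall>x\<in>L. \<exists>e\<in>E. u e = x \<and> col e = c) \<and>
     (\<forall>c<k. \<forall>y\<in>R. \<exists>e\<in>E. v e = y \<and> col e = c)"
  using assms
proof (induction k arbitrary: E)
  case 0
  note r = "0.prems"[unfolded regb_def]
  have fE: "finite E" and uv: "\<forall>e\<in>E. u e \<in> L \<and> v e \<in> R" and ku: "\<forall>x\<in>L. card {e\<in>E. u e = x} = 0"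
    using r by blast+
  have "E = {}"
  proof (rule ccontr)
    assume "E \<noteq> {}"
    then obtain e where e: "e \<in> E" by blast
    have "finite {e'\<in>E. u e' = u e}" using fE by simp
    moreover have "e \<in> {e'\<in>E. u e' = u e}" using e by simp
    ultimately have "card {e'\<in>E. u e' = u e} > 0" using card_gt_0_iff by blast
    moreover have "u e \<in> L" using uv e by blast
    ultimately show False using ku by simp
  qed
  then show ?case by simp
next
  case (Suc k)
  note r = Suc.prems[unfolded regb_def]
  have fE: "finite E" and fL: "finite L" and fR: "finite R" using r by blast+
  have uv: "\<forall>e\<in>E. u e \<in> L \<and> v e \<in> R" using r by blast
  have ku: "\<forall>x\<in>L. card {e\<in>E. u e = x} = Suc k" and kv: "\<forall>y\<in>R. card {e\<in>E. v e = y} = Suc k"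
    using r by blast+
  from regb_pm[OF Suc.prems zero_less_Suc] obtain M where
    M0: "M \<subseteq> E \<and> (\<forall>x\<in>L. \<exists>e\<in>M. u e = x) \<and> (\<forall>y\<in>R. \<exists>e\<in>M. v e = y) \<and> inj_on u M \<and> inj_on v M" ..
  have M: "M \<subseteq> E" using M0 by (rule conjunct1)
  have exu: "\<exists>e\<in>M. u e = x" if "x \<in> L" for x using M0 that by blast
  have exv: "\<exists>e\<in>M. v e = y" if "y \<in> R" for y using M0 that by blast
  have iu: "inj_on u M" and iv: "inj_on v M" using M0 by blast+
  have uniqu: "e = e'" if "e \<in> M" "e' \<in> M" "u e = u e'" for e e'
    using iu that inj_on_eq_iff by metis
  have uniqv: "e = e'" if "e \<in> M" "e' \<in> M" "v e = v e'" for e e'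
    using iv that inj_on_eq_iff by metis
  have "regb (E - M) u v L R k"
    unfolding regb_def
  proof (intro conjI ballI)
    show "finite (E - M)" using fE by simp
    show "finite L" "finite R" using fL fR by auto
    show "u e \<in> L" "v e \<in> R" if "e \<in> E - M" for e using uv that by auto
    show "card {e \<in> E - M. u e = x} = k" if x: "x \<in> L" for x
    proof -
      obtain e0 where e0: "e0 \<in> M" "u e0 = x" using exu x by blast
      have "{e\<in>E. u e = x} = insert e0 {e \<in> E - M. u e = x}"
      proof (intro set_eqI iffI)
        fix e assume "e \<in> {e\<in>E. u e = x}"
        then show "e \<in> insert e0 {e \<in> E - M. u e = x}" using uniqu[of e e0] e0 by auto
      next
        fix e assume "e \<in> insert e0 {e \<in> E - M. u e = x}"
        then show "e \<in> {e\<in>E. u e = x}" using e0 M by auto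
      qed
      moreover have "finite {e \<in> E - M. u e = x}" using fE by simp
      moreover have "e0 \<notin> {e \<in> E - M. u e = x}" using e0 by simp
      ultimately have "card {e\<in>E. u e = x} = Suc (card {e \<in> E - M. u e = x})" by simp
      then show ?thesis using ku x by simp
    qed
    show "card {e \<in> E - M. v e = y} = k" if y: "y \<in> R" for y
    proof -
      obtain e0 where e0: "e0 \<in> M" "v e0 = y" using exv y by blast
      have "{e\<in>E. v e = y} = insert e0 {e \<in> E - M. v e = y}"
      proof (intro set_eqI iffI)
        fix e assume "e \<in> {e\<in>E. v e = y}"
        then show "e \<in> insert e0 {e \<in> E - M. v e = y}" using uniqv[of e e0] e0 by auto
      next
        fix e assume "e \<in> insert e0 {e \<in> E - M. v e = y}"
        then show "e \<in> {e\<in>E. v e = y}" using e0 M by auto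
      qed
      moreover have "finite {e \<in> E - M. v e = y}" using fE by simp
      moreover have "e0 \<notin> {e \<in> E - M. v e = y}" using e0 by simp
      ultimately have "card {e\<in>E. v e = y} = Suc (card {e \<in> E - M. v e = y})" by simp
      then show ?thesis using kv y by simp
    qed
  qed
  from Suc.IH[OF this] obtain col where col:
    "\<forall>e\<in>E - M. col e < k"
    "\<forall>e\<in>E - M. \<forall>e'\<in>E - M. e \<noteq> e' \<and> (u e = u e' \<or> v e = v e') \<longrightarrow> col e \<noteq> col e'"
    "\<forall>c<k. \<forall>x\<in>L. \<exists>e\<in>E - M. u e = x \<and> col e = c"
    "\<forall>c<k. \<forall>y\<in>R. \<exists>e\<in>E - M. v e = y \<and> col e = c" by blast
  define col' where "col' e = (if e \<in> M then k else col e)" for e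
  show ?case
  proof (intro exI[of _ col'] conjI)
    show "\<forall>e\<in>E. col' e < Suc k"
    proof
      fix e assume "e \<in> E"
      then show "col' e < Suc k" using col(1) unfolding col'_def
        by (cases "e \<in> M") (auto intro: less_SucI)
    qed
    show "\<forall>e\<in>E. \<forall>e'\<in>E. e \<noteq> e' \<and> (u e = u e' \<or> v e = v e') \<longrightarrow> col' e \<noteq> col' e'"
    proof (intro ballI impI)
      fix e e' assume ee: "e \<in> E" "e' \<in> E" "e \<noteq> e' \<and> (u e = u e' \<or> v e = v e')"
      show "col' e \<noteq> col' e'"
      proof (cases "e \<in> M")
        case True
        show ?thesis
        proof (cases "e' \<in> M")
          case True
          then have False using \<open>e \<in> M\<close> ee uniqu uniqv by blast
          then show ?thesis ..
        next
          case False
          have "col e' < k" using col(1) False ee by blast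
          then show ?thesis using True False unfolding col'_def by simp
        qed
      next
        case False
        show ?thesis
        proof (cases "e' \<in> M")
          case True
          have "col e < k" using col(1) False ee by blast
          then show ?thesis using True False unfolding col'_def by simp
        next
          case F2: False
          have "col e \<noteq> col e'" using col(2) ee False F2 by blast
          then show ?thesis using False F2 unfolding col'_def by simp
        qed
      qed
    qed
    show "\<forall>c<Suc k. \<forall>x\<in>L. \<exists>e\<in>E. u e = x \<and> col' e = c"
    proof (intro allI impI ballI)
      fix c x assume c: "c < Suc k" and x: "x \<in> L"
      show "\<exists>e\<in>E. u e = x \<and> col' e = c"
      proof (cases "c = k")
        case True
        obtain e where "e \<in> M" "u e = x" using exu x by blast
        then show ?thesis using True M unfolding col'_def by auto
      next
        case False
        then have "c < k" using c by simp
        then obtain e where "e \<in> E - M" "u e = x" "col e = c" using col(3) x by blast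
        then show ?thesis unfolding col'_def by auto
      qed
    qed
    show "\<forall>c<Suc k. \<forall>y\<in>R. \<exists>e\<in>E. v e = y \<and> col' e = c"
    proof (intro allI impI ballI)
      fix c y assume c: "c < Suc k" and y: "y \<in> R"
      show "\<exists>e\<in>E. v e = y \<and> col' e = c"
      proof (cases "c = k")
        case True
        obtain e where "e \<in> M" "v e = y" using exv y by blast
        then show ?thesis using True M unfolding col'_def by auto
      next
        case False
        then have "c < k" using c by simp
        then obtain e where "e \<in> E - M" "v e = y" "col e = c" using col(4) y by blast
        then show ?thesis unfolding col'_def by auto
      qed
    qed
  qed
qed



lemma step_mono: "M i \<subseteq> step d g M s i"
  by (cases s) (auto simp: step_def)

lemma run_mono: "M i \<subseteq> run d g M ss i"
proof (induction ss arbitrary: M)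
  case Nil
  then show ?case by simp
next
  case (Cons s ss)
  then show ?case using Cons.IH[of "step d g M s"] step_mono[of M i d g s] by auto
qed

lemma valid_sched_append:
  "valid_sched d g M (xs @ ys) = (valid_sched d g M xs \<and> valid_sched d g (run d g M xs) ys)"
  by (induction xs arbitrary: M) auto

lemma run_append: "run d g M (xs @ ys) = run d g (run d g M xs) ys"
  by (induction xs arbitrary: M) auto

locale route =
  fixes d g :: nat and \<pi> :: "nat \<Rightarrow> nat" and col :: "nat \<Rightarrow> nat"
  assumes d1: "d \<ge> 1" and g1: "g \<ge> 1"
    and bij: "bij_betw \<pi> {..<d*g} {..<d*g}"
    and src: "\<And>p q. p < d*g \<Longrightarrow> q < d*g \<Longrightarrow> p \<noteq> q \<Longrightarrow> p div d = q div d \<Longrightarrow> col p \<noteq> col q"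
    and dst: "\<And>p q. p < d*g \<Longrightarrow> q < d*g \<Longrightarrow> p \<noteq> q \<Longrightarrow> \<pi> p div d = \<pi> q div d \<Longrightarrow> col p \<noteq> col q"
    and cap: "\<And>c. card {p. p < d*g \<and> col p = c} \<le> d"
begin

definition rank :: "nat \<Rightarrow> nat" where
  "rank p = card {q. q < d*g \<and> col q = col p \<and> q < p}"

definition rel :: "nat \<Rightarrow> nat" where
  "rel p = (col p mod g) * d + rank p"

definition isrel :: "nat \<Rightarrow> nat \<Rightarrow> bool" where
  "isrel r j = (\<exists>p < d*g. col p div g = r \<and> rel p = j)"

definition relp :: "nat \<Rightarrow> nat \<Rightarrow> nat" where
  "relp r j = (THE p. p < d*g \<and> col p div g = r \<and> rel p = j)"

definition pinv :: "nat \<Rightarrow> nat" where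
  "pinv = inv_into {..<d*g} \<pi>"

definition slot1 :: "nat \<Rightarrow> slot" where
  "slot1 r = ((\<lambda>i. i), (\<lambda>i. if i < d*g \<and> col i div g = r then {col i mod g} else {}),
              (\<lambda>j. if isrel r j then relp r j div d else 0))"

definition slot2 :: "nat \<Rightarrow> slot" where
  "slot2 r = ((\<lambda>j. if isrel r j then relp r j else j),
              (\<lambda>j. if isrel r j then {\<pi> (relp r j) div d} else {}),
              (\<lambda>q. if q < d*g \<and> col (pinv q) div g = r then col (pinv q) mod g else 0))"

lemma rank_lt: assumes "p < d*g" shows "rank p < d"
proof -
  have "{q. q < d*g \<and> col q = col p \<and> q < p} \<subset> {q. q < d*g \<and> col q = col p}"
    using assms by auto
  then have "rank p < card {q. q < d*g \<and> col q = col p}"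
    unfolding rank_def by (rule psubset_card_mono[rotated]) simp
  then show ?thesis using cap[of "col p"] by simp
qed

lemma rank_strict: assumes "q < d*g" "col p = col q" "p < q" shows "rank p < rank q"
proof -
  let ?A = "{x. x < d*g \<and> col x = col p \<and> x < p}"
  let ?B = "{x. x < d*g \<and> col x = col q \<and> x < q}"
  have sub: "?A \<subseteq> ?B" using assms by auto
  have pB: "p \<in> ?B" using assms by simp
  have pA: "p \<notin> ?A" by simp
  have ps: "?A \<subset> ?B" using sub pA pB by blast
  have fB: "finite ?B" by (rule finite_subset[of _ "{..<d*g}"]) auto
  have "card ?A < card ?B" by (rule psubset_card_mono[OF fB ps])
  then show ?thesis unfolding rank_def .
qed

lemma rank_inj: assumes "p < d*g" "q < d*g" "col p = col q" "rank p = rank q" shows "p = q"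
  using rank_strict[of q p] rank_strict[of p q] assms by (metis linorder_neqE_nat less_irrefl)

lemma rel_div: "p < d*g \<Longrightarrow> rel p div d = col p mod g"
  unfolding rel_def using rank_lt[of p] d1 by simp

lemma rel_mod: "p < d*g \<Longrightarrow> rel p mod d = rank p"
  unfolding rel_def using rank_lt[of p] d1 by simp

lemma rel_lt: assumes "p < d*g" shows "rel p < d*g"
proof -
  have "col p mod g < g" using g1 by simp
  then have "col p mod g + 1 \<le> g" by simp
  then have "(col p mod g + 1) * d \<le> g * d" by (rule mult_right_mono) simp
  moreover have "rel p < (col p mod g + 1) * d" unfolding rel_def using rank_lt[OF assms] by simp
  ultimately show ?thesis by (simp add: mult.commute)
qed

lemma rel_inj: assumes "p < d*g" "q < d*g" "col p div g = col q div g" "rel p = rel q" shows "p = q"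
proof -
  have "col p mod g = col q mod g" using rel_div assms by metis
  then have "col p = col q" using assms(3) by (metis div_mult_mod_eq)
  moreover have "rank p = rank q" using rel_mod assms by metis
  ultimately show ?thesis using rank_inj assms by blast
qed

lemma relp: assumes "p < d*g" "col p div g = r" shows "isrel r (rel p)" "relp r (rel p) = p"
proof -
  show "isrel r (rel p)" unfolding isrel_def using assms by blast
  show "relp r (rel p) = p" unfolding relp_def
    by (rule the_equality) (use assms rel_inj in auto)
qed

lemma isrelD: assumes "isrel r j"
  shows "relp r j < d*g" "col (relp r j) div g = r" "rel (relp r j) = j"
proof -
  obtain p where p: "p < d*g" "col p div g = r" "rel p = j" using assms isrel_def by blast
  then have "relp r j = p" using relp by blast
  then show "relp r j < d*g" "col (relp r j) div g = r" "rel (relp r j) = j" using p by auto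
qed

lemma div_lt: "p < d*g \<Longrightarrow> p div d < g"
  by (simp add: less_mult_imp_div_less mult.commute)

lemma pi_lt: "p < d*g \<Longrightarrow> \<pi> p < d*g"
  using bij bij_betw_apply by fastforce

lemma pinv_pi: "p < d*g \<Longrightarrow> pinv (\<pi> p) = p"
  unfolding pinv_def using bij bij_betw_inv_into_left by fastforce

lemma round_ok:
  assumes M: "\<forall>i. i \<in> M i"
  shows "valid_sched d g M [slot1 r, slot2 r] \<and>
         (\<forall>p < d*g. col p div g = r \<longrightarrow> p \<in> run d g M [slot1 r, slot2 r] (\<pi> p))"
proof -
  have v1: "valid_slot d g M (slot1 r)"
    unfolding valid_slot_def slot1_def grp_def
  proof (simp only: prod.case, intro conjI allI impI)
    fix i assume i: "i < d*g"
    show "(if i < d * g \<and> col i div g = r then {col i mod g} else {}) \<subseteq> {..<g}"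
      using g1 by auto
    show "(if i < d * g \<and> col i div g = r then {col i mod g} else {}) \<noteq> {} \<Longrightarrow> i \<in> M i"
      using M by auto
    show "(if isrel r i then relp r i div d else 0) < g"
      using isrelD div_lt g1 by auto
  next
    fix i j assume ij: "i < d*g" "j < d*g" "i \<noteq> j \<and> i div d = j div d"
    show "(if i < d * g \<and> col i div g = r then {col i mod g} else {}) \<inter>
          (if j < d * g \<and> col j div g = r then {col j mod g} else {}) = {}"
      using ij src by (auto, metis div_mult_mod_eq)
  qed
  define M1 where "M1 = step d g M (slot1 r)"
  have M1: "p \<in> M1 (rel p)" if p: "p < d*g" "col p div g = r" for p
  proof -
    have "p \<in> {(\<lambda>i. i) j |j. j < d * g \<and> grp d j = (if isrel r (rel p) then relp r (rel p) div d else 0)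
       \<and> grp d (rel p) \<in> (if j < d * g \<and> col j div g = r then {col j mod g} else {})}"
      using p relp[OF p] rel_div[OF p(1)] by (auto simp: grp_def)
    then show ?thesis unfolding M1_def step_def slot1_def prod.case by (rule UnI2)
  qed
  have M1i: "\<forall>i. i \<in> M1 i" using M step_mono M1_def by blast
  have v2: "valid_slot d g M1 (slot2 r)"
    unfolding valid_slot_def slot2_def grp_def
  proof (simp only: prod.case, intro conjI allI impI)
    fix i assume i: "i < d*g"
    show "(if isrel r i then {\<pi> (relp r i) div d} else {}) \<subseteq> {..<g}"
      using isrelD pi_lt div_lt by auto
    show "(if isrel r i then {\<pi> (relp r i) div d} else {}) \<noteq> {} \<Longrightarrow>
          (if isrel r i then relp r i else i) \<in> M1 i"
      using M1 isrelD by (metis (no_types, lifting))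
    show "(if i < d * g \<and> col (pinv i) div g = r then col (pinv i) mod g else 0) < g"
      using g1 by auto
  next
    fix i j assume ij: "i < d*g" "j < d*g" "i \<noteq> j \<and> i div d = j div d"
    show "(if isrel r i then {\<pi> (relp r i) div d} else {}) \<inter> (if isrel r j then {\<pi> (relp r j) div d} else {}) = {}"
    proof (cases "isrel r i \<and> isrel r j")
      case True
      define p where "p = relp r i"
      define q where "q = relp r j"
      have p: "p < d*g" "col p div g = r" "rel p = i" using isrelD True p_def by auto
      have q: "q < d*g" "col q div g = r" "rel q = j" using isrelD True q_def by auto
      have "p \<noteq> q" using p q ij by auto
      have "col p mod g = col q mod g" using rel_div p q ij by metis
      then have "col p = col q" using p q by (metis div_mult_mod_eq)
      then have "\<pi> p div d \<noteq> \<pi> q div d" using dst p q \<open>p \<noteq> q\<close> by blast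
      then show ?thesis using True p_def q_def by auto
    next
      case False
      then show ?thesis by auto
    qed
  qed
  have fin: "p \<in> step d g M1 (slot2 r) (\<pi> p)" if p: "p < d*g" "col p div g = r" for p
  proof -
    have "p \<in> {(if isrel r j then relp r j else j) |j. j < d * g \<and>
           grp d j = (if \<pi> p < d * g \<and> col (pinv (\<pi> p)) div g = r then col (pinv (\<pi> p)) mod g else 0)
           \<and> grp d (\<pi> p) \<in> (if isrel r j then {\<pi> (relp r j) div d} else {})}"
      using p relp[OF p] rel_div[OF p(1)] rel_lt[OF p(1)] pinv_pi[OF p(1)] pi_lt[OF p(1)]
      by (auto simp: grp_def intro!: exI[of _ "rel p"])
    then show ?thesis unfolding step_def slot2_def prod.case by (rule UnI2)
  qed
  show ?thesis using v1 v2 fin unfolding M1_def by simp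
qed

definition sched :: "nat list \<Rightarrow> slot list" where
  "sched rs = concat (map (\<lambda>r. [slot1 r, slot2 r]) rs)"

lemma sched_ok:
  assumes "\<forall>i. i \<in> M i"
  shows "valid_sched d g M (sched rs) \<and>
         (\<forall>p < d*g. col p div g \<in> set rs \<longrightarrow> p \<in> run d g M (sched rs) (\<pi> p))"
  using assms
proof (induction rs arbitrary: M)
  case Nil
  then show ?case by (simp add: sched_def)
next
  case (Cons r rs)
  define M' where "M' = run d g M [slot1 r, slot2 r]"
  have M': "\<forall>i. i \<in> M' i" using Cons.prems run_mono M'_def by blast
  have e: "sched (r # rs) = [slot1 r, slot2 r] @ sched rs" by (simp add: sched_def)
  note ro = round_ok[OF Cons.prems, of r]
  note ih = Cons.IH[OF M']
  show ?case
  proof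
    show "valid_sched d g M (sched (r # rs))"
      using ro ih unfolding e valid_sched_append M'_def by simp
    show "\<forall>p<d * g. col p div g \<in> set (r # rs) \<longrightarrow> p \<in> run d g M (sched (r # rs)) (\<pi> p)"
    proof (intro allI impI)
      fix p assume p: "p < d*g" "col p div g \<in> set (r # rs)"
      show "p \<in> run d g M (sched (r # rs)) (\<pi> p)"
      proof (cases "col p div g = r")
        case True
        then have "p \<in> M' (\<pi> p)" using ro p M'_def by blast
        then show ?thesis unfolding e run_append M'_def[symmetric] using run_mono by blast
      next
        case False
        then show ?thesis unfolding e run_append M'_def[symmetric] using ih p by auto
      qed
    qed
  qed
qed

lemma routable:
  assumes "\<forall>p < d*g. col p < g * k"
  shows "routable_in d g \<pi> (2 * k)"
proof -
  have "\<forall>p < d*g. col p div g \<in> set [0..<k]"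
    using assms by (simp add: less_mult_imp_div_less mult.commute)
  moreover have "length (sched [0..<k]) = 2 * k"
    unfolding sched_def by (induction k) auto
  ultimately show ?thesis unfolding routable_in_def
    using sched_ok[of "\<lambda>i. {i}" "[0..<k]"] by (intro exI[of _ "sched [0..<k]"]) auto
qed

end



lemma fib_set:
  fixes d a g :: nat
  assumes "0 < d" "a < g"
  shows "{p\<in>{..<d*g}. p div d = a} = {a*d..<a*d+d}"
proof (intro set_eqI iffI)
  fix p assume "p \<in> {p\<in>{..<d*g}. p div d = a}"
  then have "p div d = a" by simp
  moreover have "p = p div d * d + p mod d" by simp
  moreover have "p mod d < d" using assms by simp
  ultimately show "p \<in> {a*d..<a*d+d}" by (metis atLeastLessThan_iff le_add1 add_less_cancel_left)
next
  fix p assume p: "p \<in> {a*d..<a*d+d}"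
  have "p div d = a" by (rule div_nat_eqI) (use p in \<open>auto simp: mult.commute\<close>)
  moreover have "a*d + d \<le> d*g"
  proof -
    have "(a+1)*d \<le> g*d" using assms by (intro mult_right_mono) auto
    then show ?thesis by (simp add: mult.commute)
  qed
  ultimately show "p \<in> {p\<in>{..<d*g}. p div d = a}" using p by auto
qed

lemma fib_card: "0 < d \<Longrightarrow> a < g \<Longrightarrow> card {p\<in>{..<d*g}. p div d = a} = d"
  using fib_set[of d a g] by simp

lemma fib_card_pi:
  assumes "0 < d" "b < g" "bij_betw \<pi> {..<d*g} {..<d*g}"
  shows "card {p\<in>{..<d*g}. \<pi> p div d = b} = d"
proof -
  have im: "\<pi> ` {..<d*g} = {..<d*g}" and inj: "inj_on \<pi> {..<d*g}"
    using assms(3) unfolding bij_betw_def by blast+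
  have "\<pi> ` {p\<in>{..<d*g}. \<pi> p div d = b} = {q\<in>{..<d*g}. q div d = b}"
  proof (intro set_eqI iffI)
    fix q assume "q \<in> \<pi> ` {p\<in>{..<d*g}. \<pi> p div d = b}"
    then obtain p where p: "p \<in> {..<d*g}" "\<pi> p div d = b" "q = \<pi> p" by blast
    have "\<pi> p \<in> {..<d*g}" using p(1) im by blast
    then show "q \<in> {q\<in>{..<d*g}. q div d = b}" using p by simp
  next
    fix q assume q: "q \<in> {q\<in>{..<d*g}. q div d = b}"
    then have "q \<in> \<pi> ` {..<d*g}" using im by simp
    then obtain p where p: "p \<in> {..<d*g}" "q = \<pi> p" by blast
    then show "q \<in> \<pi> ` {p\<in>{..<d*g}. \<pi> p div d = b}" using q by blast
  qed
  note eq = this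
  have inj2: "inj_on \<pi> {p\<in>{..<d*g}. \<pi> p div d = b}"
    by (rule inj_on_subset[OF inj]) blast
  have "card {p\<in>{..<d*g}. \<pi> p div d = b} = card (\<pi> ` {p\<in>{..<d*g}. \<pi> p div d = b})"
    by (rule card_image[OF inj2, symmetric])
  also have "\<dots> = card {q\<in>{..<d*g}. q div d = b}" by (simp only: eq)
  also have "\<dots> = d" by (rule fib_card[OF assms(1,2)])
  finally show ?thesis .
qed

lemma color_big:
  assumes d1: "d \<ge> 1" and g1: "g \<ge> 1" and bij: "bij_betw \<pi> {..<d*g} {..<d*g}" and gd: "g \<le> d"
  shows "\<exists>col. (\<forall>p<d*g. col p < d) \<and>
    (\<forall>p q. p < d*g \<longrightarrow> q < d*g \<longrightarrow> p \<noteq> q \<longrightarrow> p div d = q div d \<longrightarrow> col p \<noteq> col q) \<and>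
    (\<forall>p q. p < d*g \<longrightarrow> q < d*g \<longrightarrow> p \<noteq> q \<longrightarrow> \<pi> p div d = \<pi> q div d \<longrightarrow> col p \<noteq> col q) \<and>
    (\<forall>c. card {p. p < d*g \<and> col p = c} \<le> d)"
proof -
  have "regb {..<d*g} (\<lambda>p. p div d) (\<lambda>p. \<pi> p div d) {..<g} {..<g} d"
    unfolding regb_def
  proof (intro conjI ballI)
    show "finite {..<d*g}" "finite {..<g}" "finite {..<g}" by auto
    show "e div d \<in> {..<g}" if "e \<in> {..<d*g}" for e
      using that by (simp add: less_mult_imp_div_less mult.commute)
    show "\<pi> e div d \<in> {..<g}" if "e \<in> {..<d*g}" for e
      using that bij bij_betw_apply by (fastforce simp: less_mult_imp_div_less mult.commute)
    show "card {e \<in> {..<d * g}. e div d = x} = d" if "x \<in> {..<g}" for x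
      using fib_card[of d x g] that d1 by simp
    show "card {e \<in> {..<d * g}. \<pi> e div d = x} = d" if "x \<in> {..<g}" for x
      using fib_card_pi[of d x g \<pi>] that d1 bij by simp
  qed
  from regb_col[OF this] obtain col where col: "\<forall>e\<in>{..<d*g}. col e < d"
    "\<forall>e\<in>{..<d*g}. \<forall>e'\<in>{..<d*g}. e \<noteq> e' \<and> (e div d = e' div d \<or> \<pi> e div d = \<pi> e' div d) \<longrightarrow> col e \<noteq> col e'"
    by blast
  have cap: "card {p. p < d*g \<and> col p = c} \<le> d" for c
  proof -
    have "inj_on (\<lambda>p. p div d) {p. p < d*g \<and> col p = c}"
    proof (rule inj_onI)
      fix x y assume xy: "x \<in> {p. p < d*g \<and> col p = c}" "y \<in> {p. p < d*g \<and> col p = c}" "x div d = y div d"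
      show "x = y"
      proof (rule ccontr)
        assume "x \<noteq> y"
        then have "col x \<noteq> col y" using col(2) xy by auto
        then show False using xy by simp
      qed
    qed
    moreover have "(\<lambda>p. p div d) ` {p. p < d*g \<and> col p = c} \<subseteq> {..<g}"
      by (auto simp: less_mult_imp_div_less mult.commute)
    ultimately have "card {p. p < d*g \<and> col p = c} \<le> card {..<g}"
      by (intro card_inj_on_le) auto
    then show ?thesis using gd by simp
  qed
  show ?thesis using col cap by (intro exI[of _ col]) auto
qed



lemma color_small:
  assumes d1: "d \<ge> 1" and g1: "g \<ge> 1" and bij: "bij_betw \<pi> {..<d*g} {..<d*g}" and dg: "d < g"
  shows "\<exists>col. (\<forall>p<d*g. col p < g) \<and>
    (\<forall>p q. p < d*g \<longrightarrow> q < d*g \<longrightarrow> p \<noteq> q \<longrightarrow> p div d = q div d \<longrightarrow> col p \<noteq> col q) \<and>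
    (\<forall>p q. p < d*g \<longrightarrow> q < d*g \<longrightarrow> p \<noteq> q \<longrightarrow> \<pi> p div d = \<pi> q div d \<longrightarrow> col p \<noteq> col q) \<and>
    (\<forall>c. card {p. p < d*g \<and> col p = c} \<le> d)"
proof -
  define m where "m = 2*g - d"
  define D where "D = ({..<g} \<times> {g..<m}) \<union> ({g..<m} \<times> {..<g})"
  define E :: "(nat + nat \<times> nat) set" where "E = Inl ` {..<d*g} \<union> Inr ` D"
  define u :: "nat + nat \<times> nat \<Rightarrow> nat" where "u = case_sum (\<lambda>p. p div d) fst"
  define v :: "nat + nat \<times> nat \<Rightarrow> nat" where "v = case_sum (\<lambda>p. \<pi> p div d) snd"
  have divlt: "p div d < g" if "p < d*g" for p using that by (simp add: less_mult_imp_div_less mult.commute)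
  have pilt: "\<pi> p < d*g" if "p < d*g" for p using that bij bij_betw_apply by fastforce
  have mg: "m - g = g - d" unfolding m_def by simp
  have gm: "g \<le> m" unfolding m_def using dg by simp
  have divm: "p div d < m" if "p < d*g" for p using divlt[OF that] gm by simp
  have pidivm: "\<pi> p div d < m" if "p < d*g" for p using divlt[OF pilt[OF that]] gm by simp
  have "regb E u v {..<m} {..<m} g"
    unfolding regb_def
  proof (intro conjI ballI)
    show "finite E" unfolding E_def D_def by auto
    show "finite {..<m}" "finite {..<m}" by auto
    show "u e \<in> {..<m}" if "e \<in> E" for e
      using that divm unfolding E_def D_def u_def by auto
    show "v e \<in> {..<m}" if "e \<in> E" for e
      using that pidivm unfolding E_def D_def v_def by auto
    show "card {e \<in> E. u e = x} = g" if x: "x \<in> {..<m}" for x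
    proof (cases "x < g")
      case True
      have "{e \<in> E. u e = x} = Inl ` {p\<in>{..<d*g}. p div d = x} \<union> Inr ` ({x} \<times> {g..<m})"
        unfolding E_def D_def u_def using True by auto
      moreover have "card (Inl ` {p\<in>{..<d*g}. p div d = x} :: (nat + nat \<times> nat) set) = d"
        using fib_card[of d x g] True d1 by (simp add: card_image)
      moreover have "card (Inr ` ({x} \<times> {g..<m}) :: (nat + nat \<times> nat) set) = m - g"
        by (simp add: card_image card_cartesian_product)
      moreover have "Inl ` {p\<in>{..<d*g}. p div d = x} \<inter> Inr ` ({x} \<times> {g..<m}) = {}" by auto
      ultimately show ?thesis using mg dg by (simp add: card_Un_disjoint)
    next
      case False
      have "{e \<in> E. u e = x} = Inr ` ({x} \<times> {..<g})"
        unfolding E_def D_def u_def using False x divlt by auto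
      then show ?thesis by (simp add: card_image card_cartesian_product)
    qed
    show "card {e \<in> E. v e = y} = g" if y: "y \<in> {..<m}" for y
    proof (cases "y < g")
      case True
      have "{e \<in> E. v e = y} = Inl ` {p\<in>{..<d*g}. \<pi> p div d = y} \<union> Inr ` ({g..<m} \<times> {y})"
        unfolding E_def D_def v_def using True by auto
      moreover have "card (Inl ` {p\<in>{..<d*g}. \<pi> p div d = y} :: (nat + nat \<times> nat) set) = d"
        using fib_card_pi[of d y g \<pi>] True d1 bij by (simp add: card_image)
      moreover have "card (Inr ` ({g..<m} \<times> {y}) :: (nat + nat \<times> nat) set) = m - g"
        by (simp add: card_image card_cartesian_product)
      moreover have "Inl ` {p\<in>{..<d*g}. \<pi> p div d = y} \<inter> Inr ` ({g..<m} \<times> {y}) = {}" by auto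
      ultimately show ?thesis using mg dg by (simp add: card_Un_disjoint)
    next
      case False
      have "{e \<in> E. v e = y} = Inr ` ({..<g} \<times> {y})"
        unfolding E_def D_def v_def using False y divlt pilt by auto
      then show ?thesis by (simp add: card_image card_cartesian_product)
    qed
  qed
  from regb_col[OF this] obtain col where col: "\<forall>e\<in>E. col e < g"
    "\<forall>e\<in>E. \<forall>e'\<in>E. e \<noteq> e' \<and> (u e = u e' \<or> v e = v e') \<longrightarrow> col e \<noteq> col e'"
    "\<forall>c<g. \<forall>x\<in>{..<m}. \<exists>e\<in>E. u e = x \<and> col e = c"
    by blast
  define col' where "col' p = col (Inl p)" for p
  have inE: "Inl p \<in> E" if "p < d*g" for p using that E_def by auto
  have cap: "card {p. p < d*g \<and> col' p = c} \<le> d" for c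
  proof (cases "c < g")
    case False
    have lt: "col' p < g" if "p < d*g" for p using col(1) inE[OF that] unfolding col'_def by blast
    have "{p. p < d*g \<and> col' p = c} = {}"
    proof (rule equals0I)
      fix p assume "p \<in> {p. p < d*g \<and> col' p = c}"
      then have "p < d*g" "col' p = c" by auto
      then show False using lt False by fastforce
    qed
    then show ?thesis by (metis card.empty zero_le)
  next
    case True
    define Cr :: "(nat + nat \<times> nat) set" where "Cr = Inl ` {p. p < d*g \<and> col' p = c}"
    define Cx where "Cx = {e\<in>E. col e = c \<and> g \<le> u e}"
    have CrE: "Cr \<subseteq> E" "\<forall>e\<in>Cr. col e = c" unfolding Cr_def col'_def using inE by auto
    have CxE: "Cx \<subseteq> E" "\<forall>e\<in>Cx. col e = c" unfolding Cx_def by auto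
    have injv: "inj_on v (Cr \<union> Cx)"
    proof (rule inj_onI)
      fix e e' assume ee: "e \<in> Cr \<union> Cx" "e' \<in> Cr \<union> Cx" "v e = v e'"
      have inE2: "e \<in> E" "e' \<in> E" using ee(1,2) CrE(1) CxE(1) by blast+
      have cc: "col e = c" "col e' = c" using ee(1,2) CrE(2) CxE(2) by blast+
      show "e = e'"
      proof (rule ccontr)
        assume "e \<noteq> e'"
        then have "col e \<noteq> col e'" using col(2) inE2 ee(3) by blast
        then show False using cc by simp
      qed
    qed
    have vsub: "v ` (Cr \<union> Cx) \<subseteq> {..<g}"
    proof
      fix y assume "y \<in> v ` (Cr \<union> Cx)"
      then obtain e where e: "e \<in> Cr \<union> Cx" "y = v e" by blast
      show "y \<in> {..<g}"
      proof (cases "e \<in> Cr")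
        case True
        then show ?thesis using e Cr_def v_def divlt pilt by auto
      next
        case False
        then have "e \<in> Cx" using e by blast
        then have eE: "e \<in> E" and ge: "g \<le> u e" unfolding Cx_def by auto
        show ?thesis
        proof (cases e)
          case (Inl x)
          then have "x < d*g" using eE unfolding E_def by auto
          then have "u e < g" using Inl divlt unfolding u_def by simp
          then show ?thesis using ge by simp
        next
          case (Inr z)
          then have "z \<in> D" using eE unfolding E_def by auto
          moreover have "g \<le> fst z" using ge Inr unfolding u_def by simp
          ultimately have "snd z < g" unfolding D_def by auto
          then show ?thesis using e Inr unfolding v_def by simp
        qed
      qed
    qed
    have fCx: "finite Cx" unfolding Cx_def E_def D_def by auto
    have fCr: "finite Cr" unfolding Cr_def by auto
    have "card (Cr \<union> Cx) \<le> g"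
      using card_mono[OF _ vsub] card_image[OF injv] by simp
    moreover have "Cr \<inter> Cx = {}"
    proof (rule equals0I)
      fix e assume "e \<in> Cr \<inter> Cx"
      then obtain x where x: "x < d*g" "e = Inl x" "g \<le> u e" unfolding Cr_def Cx_def by auto
      then have "u e < g" using divlt unfolding u_def by simp
      then show False using x by simp
    qed
    ultimately have s: "card Cr + card Cx \<le> g" using card_Un_disjoint[OF fCr fCx] by simp
    have "{g..<m} \<subseteq> u ` Cx"
    proof
      fix x assume x: "x \<in> {g..<m}"
      then obtain e where "e \<in> E" "u e = x" "col e = c" using col(3) True by fastforce
      then show "x \<in> u ` Cx" unfolding Cx_def using x by auto
    qed
    then have "m - g \<le> card Cx"
      using card_mono[OF finite_imageI[OF fCx]] card_image_le[OF fCx, of u] by fastforce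
    moreover have "card Cr = card {p. p < d*g \<and> col' p = c}" unfolding Cr_def by (simp add: card_image)
    ultimately show ?thesis using s mg dg by linarith
  qed
  show ?thesis
  proof (intro exI[of _ col'] conjI allI impI)
    show "col' p < g" if "p < d*g" for p using col(1) inE that col'_def by auto
    show "col' p \<noteq> col' q" if "p < d*g" "q < d*g" "p \<noteq> q" "p div d = q div d" for p q
      using col(2) inE that unfolding col'_def u_def by fastforce
    show "col' p \<noteq> col' q" if "p < d*g" "q < d*g" "p \<noteq> q" "\<pi> p div d = \<pi> q div d" for p q
      using col(2) inE that unfolding col'_def v_def by fastforce
    show "card {p. p < d*g \<and> col' p = c} \<le> d" for c using cap by blast
  qed
qed



lemma route_d1:
  assumes bij: "bij_betw \<pi> {..<g} {..<g}"
  shows "routable_in 1 g \<pi> 1"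
proof -
  define s :: slot where "s = ((\<lambda>i. i), (\<lambda>i. {\<pi> i}), (\<lambda>j. inv_into {..<g} \<pi> j))"
  have pilt: "\<pi> i < g" if "i < g" for i using that bij bij_betw_apply by fastforce
  have invlt: "inv_into {..<g} \<pi> j < g" if "j < g" for j
    using that bij bij_betw_inv_into bij_betw_apply by fastforce
  have invpi: "inv_into {..<g} \<pi> (\<pi> i) = i" if "i < g" for i
    using that bij bij_betw_inv_into_left by fastforce
  have v: "valid_slot 1 g (\<lambda>i. {i}) s"
    unfolding valid_slot_def s_def grp_def using pilt invlt by auto
  have r: "i \<in> step 1 g (\<lambda>i. {i}) s (\<pi> i)" if "i < g" for i
  proof -
    have "i \<in> {(\<lambda>i. i) j |j. j < 1 * g \<and> grp 1 j = inv_into {..<g} \<pi> (\<pi> i) \<and> grp 1 (\<pi> i) \<in> {\<pi> j}}"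
      using that invpi by (auto simp: grp_def)
    then show ?thesis unfolding step_def s_def prod.case by (rule UnI2)
  qed
  have a: "valid_sched 1 g (\<lambda>i. {i}) [s]" using v by simp
  have b: "\<forall>i<1*g. i \<in> run 1 g (\<lambda>i. {i}) [s] (\<pi> i)" using r by simp
  have l: "length [s] = 1" by simp
  show ?thesis unfolding routable_in_def by (rule exI[of _ "[s]"], intro conjI l a b)
qed

lemma ceil_facts:
  assumes "d \<ge> 1" "g \<ge> 1"
  shows "1 \<le> nat \<lceil>real d / real g\<rceil>" "d \<le> g * nat \<lceil>real d / real g\<rceil>"
proof -
  define x where "x = real d / real g"
  have gpos: "0 < real g" using assms by simp
  have pos: "0 < x" using assms unfolding x_def by simp
  then have c1: "1 \<le> \<lceil>x\<rceil>" by simp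
  then show "1 \<le> nat \<lceil>real d / real g\<rceil>" unfolding x_def by (subst le_nat_iff) auto
  have k: "real (nat \<lceil>x\<rceil>) = of_int \<lceil>x\<rceil>" using c1 by (intro of_nat_nat) simp
  have "x \<le> real (nat \<lceil>x\<rceil>)" using k by simp
  then have "real d \<le> real (nat \<lceil>x\<rceil>) * real g" unfolding x_def using pos_divide_le_eq[OF gpos] by blast
  then have "real d \<le> real (nat \<lceil>x\<rceil> * g)" by (simp only: of_nat_mult)
  then have "d \<le> nat \<lceil>x\<rceil> * g" by (simp only: of_nat_le_iff)
  then show "d \<le> g * nat \<lceil>real d / real g\<rceil>" unfolding x_def by (metis mult.commute)
qed

theorem theorem2:
  fixes d g :: nat and \<pi> :: "nat \<Rightarrow> nat"
  assumes "d \<ge> 1" and "g \<ge> 1"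
    and "bij_betw \<pi> {..<d*g} {..<d*g}"
  shows "routable_in d g \<pi>
           (if d = 1 then 1 else 2 * nat \<lceil>real d / real g\<rceil>)"
proof (cases "d = 1")
  case True
  then show ?thesis using route_d1[of \<pi> g] assms(3) by simp
next
  case False
  define k where "k = nat \<lceil>real d / real g\<rceil>"
  have k1: "1 \<le> k" and dk: "d \<le> g * k" using ceil_facts[OF assms(1,2)] k_def by auto
  have "\<exists>col. (\<forall>p<d*g. col p < g * k) \<and>
    (\<forall>p q. p < d*g \<longrightarrow> q < d*g \<longrightarrow> p \<noteq> q \<longrightarrow> p div d = q div d \<longrightarrow> col p \<noteq> col q) \<and>
    (\<forall>p q. p < d*g \<longrightarrow> q < d*g \<longrightarrow> p \<noteq> q \<longrightarrow> \<pi> p div d = \<pi> q div d \<longrightarrow> col p \<noteq> col q) \<and>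
    (\<forall>c. card {p. p < d*g \<and> col p = c} \<le> d)"
  proof (cases "g \<le> d")
    case True
    then obtain col where c: "\<forall>p<d*g. col p < d"
      "\<forall>p q. p < d*g \<longrightarrow> q < d*g \<longrightarrow> p \<noteq> q \<longrightarrow> p div d = q div d \<longrightarrow> col p \<noteq> col q"
      "\<forall>p q. p < d*g \<longrightarrow> q < d*g \<longrightarrow> p \<noteq> q \<longrightarrow> \<pi> p div d = \<pi> q div d \<longrightarrow> col p \<noteq> col q"
      "\<forall>c. card {p. p < d*g \<and> col p = c} \<le> d"
      using color_big[OF assms True] by blast
    have "\<forall>p<d*g. col p < g * k" using c(1) dk by (meson less_le_trans)
    then show ?thesis using c by blast
  next
    case False
    then have dg: "d < g" by simp
    then obtain col where c: "\<forall>p<d*g. col p < g"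
      "\<forall>p q. p < d*g \<longrightarrow> q < d*g \<longrightarrow> p \<noteq> q \<longrightarrow> p div d = q div d \<longrightarrow> col p \<noteq> col q"
      "\<forall>p q. p < d*g \<longrightarrow> q < d*g \<longrightarrow> p \<noteq> q \<longrightarrow> \<pi> p div d = \<pi> q div d \<longrightarrow> col p \<noteq> col q"
      "\<forall>c. card {p. p < d*g \<and> col p = c} \<le> d"
      using color_small[OF assms dg] by blast
    have "g \<le> g * k" using k1 by simp
    then have "\<forall>p<d*g. col p < g * k" using c(1) by (meson less_le_trans)
    then show ?thesis using c by blast
  qed
  then obtain col where c: "\<forall>p<d*g. col p < g * k"
      "\<forall>p q. p < d*g \<longrightarrow> q < d*g \<longrightarrow> p \<noteq> q \<longrightarrow> p div d = q div d \<longrightarrow> col p \<noteq> col q"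
      "\<forall>p q. p < d*g \<longrightarrow> q < d*g \<longrightarrow> p \<noteq> q \<longrightarrow> \<pi> p div d = \<pi> q div d \<longrightarrow> col p \<noteq> col q"
      "\<forall>c. card {p. p < d*g \<and> col p = c} \<le> d" by blast
  interpret R: route d g \<pi> col
    by unfold_locales (use assms c in blast)+
  have "routable_in d g \<pi> (2 * k)" by (rule R.routable) (rule c(1))
  then show ?thesis using False k_def by simp
qed

end
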